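(* Let $n_1,n_2,n_3$ be integers with $3\le n_1,n_2\le n_3$ and let $W$ be a subset of the vertex set of $K(\mathbf{n})$. If the landmark graph $\mathcal{G}(W)$ contains a triple loop and a rainbow $2$-$2$-triangle, then $W$ is not a resolving set of $K(\mathbf{n})$.
   Context: $K(\mathbf{n})=K_{n_1}\times K_{n_2}\times K_{n_3}$ is the direct product of complete graphs: vertices are triples $(x_1,x_2,x_3)$, $1\le x_i\le n_i$, adjacent iff they differ in every coordinate. A set $W$ of vertices is resolving if for every two distinct vertices $x,y\notin W$ some $w\in W$ has $d(x,w)\neq d(y,w)$. Landmark graph: $W_{i,a}=\{w\in W: w_i=a\}$; $\mathcal{G}(W)$ is the hypergraph on $W$ whose hyperedges are the nonempty $W_{i,a}$, each colored $i$. A triple loop is a vertex $u\in W$ such that $\{u\}=W_{1,u_1}=W_{2,u_2}=W_{3,u_3}$. A rainbow $2$-$2$-triangle: distinct $w_1,w_2,w_3\in W$ and $\{i,j,k\}=\{1,2,3\}$ with $\{w_1,w_2\}$ a hyperedge of color $i$, $\{w_2,w_3\}$ a hyperedge of color $j$, and $w_1,w_3$ in a common hyperedge of color $k$. *)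

theory Defs
  imports Main "HOL-Library.Extended_Nat"
begin

type_synonym vtx = "nat \<times> nat \<times> nat"

definition coord :: "vtx \<Rightarrow> nat \<Rightarrow> nat" where
  "coord x i = (if i = 1 then fst x else if i = 2 then fst (snd x) else snd (snd x))"

definition Kverts :: "nat \<Rightarrow> nat \<Rightarrow> nat \<Rightarrow> vtx set" where
  "Kverts n1 n2 n3 = {1..n1} \<times> {1..n2} \<times> {1..n3}"

(* adjacency in the direct product: differ in every coordinate *)
definition Kadj :: "nat \<Rightarrow> nat \<Rightarrow> nat \<Rightarrow> vtx \<Rightarrow> vtx \<Rightarrow> bool" where
  "Kadj n1 n2 n3 x y \<longleftrightarrow> x \<in> Kverts n1 n2 n3 \<and> y \<in> Kverts n1 n2 n3 \<and>
     (\<forall>i\<in>{1,2,3::nat}. coord x i \<noteq> coord y i)"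

fun Kwalk :: "nat \<Rightarrow> nat \<Rightarrow> nat \<Rightarrow> nat \<Rightarrow> vtx \<Rightarrow> vtx \<Rightarrow> bool" where
  "Kwalk n1 n2 n3 0 x y \<longleftrightarrow> x = y \<and> x \<in> Kverts n1 n2 n3"
| "Kwalk n1 n2 n3 (Suc k) x y \<longleftrightarrow> (\<exists>z. Kadj n1 n2 n3 x z \<and> Kwalk n1 n2 n3 k z y)"

definition Kdist :: "nat \<Rightarrow> nat \<Rightarrow> nat \<Rightarrow> vtx \<Rightarrow> vtx \<Rightarrow> enat" where
  "Kdist n1 n2 n3 x y = (INF k \<in> {k. Kwalk n1 n2 n3 k x y}. enat k)"

definition resolving :: "nat \<Rightarrow> nat \<Rightarrow> nat \<Rightarrow> vtx set \<Rightarrow> bool" where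
  "resolving n1 n2 n3 W \<longleftrightarrow> W \<subseteq> Kverts n1 n2 n3 \<and>
     (\<forall>x\<in>Kverts n1 n2 n3 - W. \<forall>y\<in>Kverts n1 n2 n3 - W. x \<noteq> y \<longrightarrow>
        (\<exists>w\<in>W. Kdist n1 n2 n3 x w \<noteq> Kdist n1 n2 n3 y w))"

definition Wcls :: "vtx set \<Rightarrow> nat \<Rightarrow> nat \<Rightarrow> vtx set" where
  "Wcls W i a = {w \<in> W. coord w i = a}"

(* hyperedge of color i of the landmark graph: a nonempty W_{i,a} *)
definition hyperedge :: "vtx set \<Rightarrow> nat \<Rightarrow> vtx set \<Rightarrow> bool" where
  "hyperedge W i E \<longleftrightarrow> i \<in> {1,2,3} \<and> (\<exists>a. E = Wcls W i a \<and> E \<noteq> {})"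

definition triple_loop :: "vtx set \<Rightarrow> vtx \<Rightarrow> bool" where
  "triple_loop W u \<longleftrightarrow> u \<in> W \<and>
     Wcls W 1 (coord u 1) = {u} \<and> Wcls W 2 (coord u 2) = {u} \<and> Wcls W 3 (coord u 3) = {u}"

definition rainbow_22_triangle :: "vtx set \<Rightarrow> bool" where
  "rainbow_22_triangle W \<longleftrightarrow> (\<exists>w1 w2 w3 i j k.
     w1 \<in> W \<and> w2 \<in> W \<and> w3 \<in> W \<and> w1 \<noteq> w2 \<and> w2 \<noteq> w3 \<and> w1 \<noteq> w3 \<and>
     {i, j, k} = {1, 2, 3::nat} \<and>
     hyperedge W i {w1, w2} \<and> hyperedge W j {w2, w3} \<and>
     (\<exists>E. hyperedge W k E \<and> w1 \<in> E \<and> w3 \<in> E))"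

end

theory Submission
  imports Defs
begin

definition mkv :: "(nat \<Rightarrow> nat) \<Rightarrow> vtx" where
  "mkv g = (g 1, g 2, g 3)"

lemma coord_mkv: "l \<in> {1,2,3} \<Longrightarrow> coord (mkv g) l = g l"
  unfolding coord_def mkv_def by auto

lemma Kverts_coord: "x \<in> Kverts n1 n2 n3 \<longleftrightarrow>
   coord x 1 \<in> {1..n1} \<and> coord x 2 \<in> {1..n2} \<and> coord x 3 \<in> {1..n3}"
  unfolding Kverts_def coord_def by (cases x) auto

lemma mkv_Kverts:
  assumes "\<And>l. l \<in> {1,2,3} \<Longrightarrow> s l \<in> Kverts n1 n2 n3"
  shows "mkv (\<lambda>l. coord (s l) l) \<in> Kverts n1 n2 n3"
proof -
  have "s 1 \<in> Kverts n1 n2 n3" "s 2 \<in> Kverts n1 n2 n3" "s 3 \<in> Kverts n1 n2 n3"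
    using assms by auto
  then show ?thesis unfolding Kverts_coord by (simp add: coord_mkv)
qed

lemma third_val:
  assumes "a \<in> {1..n}" "b \<in> {1..(n::nat)}" "3 \<le> n"
  shows "\<exists>c\<in>{1..n}. c \<noteq> a \<and> c \<noteq> b"
proof -
  have "1 \<in> {1..n}" "2 \<in> {1..n}" "3 \<in> {1..n}" using assms by auto
  show ?thesis
  proof (cases "1 \<noteq> a \<and> 1 \<noteq> b")
    case True then show ?thesis using \<open>1 \<in> {1..n}\<close> by blast
  next
    case F1: False
    show ?thesis
    proof (cases "2 \<noteq> a \<and> 2 \<noteq> b")
      case True then show ?thesis using \<open>2 \<in> {1..n}\<close> by blast
    next
      case False
      then have "3 \<noteq> a \<and> 3 \<noteq> b" using F1 by auto
      then show ?thesis using \<open>3 \<in> {1..n}\<close> by blast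
    qed
  qed
qed

lemma walk2:
  assumes "x \<in> Kverts n1 n2 n3" "y \<in> Kverts n1 n2 n3" "3 \<le> n1" "3 \<le> n2" "3 \<le> n3"
  shows "Kwalk n1 n2 n3 2 x y"
proof -
  obtain c1 where c1: "c1 \<in> {1..n1}" "c1 \<noteq> coord x 1" "c1 \<noteq> coord y 1"
    using third_val[of "coord x 1" n1 "coord y 1"] assms unfolding Kverts_coord by auto
  obtain c2 where c2: "c2 \<in> {1..n2}" "c2 \<noteq> coord x 2" "c2 \<noteq> coord y 2"
    using third_val[of "coord x 2" n2 "coord y 2"] assms unfolding Kverts_coord by auto
  obtain c3 where c3: "c3 \<in> {1..n3}" "c3 \<noteq> coord x 3" "c3 \<noteq> coord y 3"
    using third_val[of "coord x 3" n3 "coord y 3"] assms unfolding Kverts_coord by auto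
  define z where "z = (c1, c2, c3)"
  have cz: "coord z 1 = c1" "coord z 2 = c2" "coord z 3 = c3" unfolding z_def coord_def by auto
  have zK: "z \<in> Kverts n1 n2 n3" unfolding Kverts_coord cz using c1 c2 c3 by auto
  have "Kadj n1 n2 n3 x z" unfolding Kadj_def using assms zK cz c1 c2 c3 by auto
  moreover have "Kadj n1 n2 n3 z y" unfolding Kadj_def using assms zK cz c1 c2 c3 by auto
  ultimately show ?thesis using assms(2) unfolding numeral_2_eq_2 by (simp only: Kwalk.simps) blast
qed

lemma Kdist_eq:
  assumes "Kwalk n1 n2 n3 k x y" "\<And>k'. k' < k \<Longrightarrow> \<not> Kwalk n1 n2 n3 k' x y"
  shows "Kdist n1 n2 n3 x y = enat k"
  unfolding Kdist_def
proof (rule antisym)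
  show "(INF k\<in>{k. Kwalk n1 n2 n3 k x y}. enat k) \<le> enat k"
    by (rule INF_lower) (simp add: assms(1))
  show "enat k \<le> (INF k\<in>{k. Kwalk n1 n2 n3 k x y}. enat k)"
  proof (rule INF_greatest)
    fix i assume "i \<in> {k. Kwalk n1 n2 n3 k x y}"
    then have "\<not> i < k" using assms(2) by blast
    then show "enat k \<le> enat i" by simp
  qed
qed

lemma Kdist_val:
  assumes "x \<in> Kverts n1 n2 n3" "y \<in> Kverts n1 n2 n3" "3 \<le> n1" "3 \<le> n2" "3 \<le> n3" "x \<noteq> y"
  shows "Kdist n1 n2 n3 x y = (if Kadj n1 n2 n3 x y then 1 else 2)"
proof (cases "Kadj n1 n2 n3 x y")
  case True
  have "Kdist n1 n2 n3 x y = enat (Suc 0)"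
  proof (rule Kdist_eq)
    show "Kwalk n1 n2 n3 (Suc 0) x y" using True assms(2) by (simp only: Kwalk.simps) blast
    fix k' :: nat assume "k' < Suc 0"
    then have "k' = 0" by simp
    then show "\<not> Kwalk n1 n2 n3 k' x y" using assms(6) by (simp only: Kwalk.simps) blast
  qed
  then show ?thesis using True by (simp add: one_enat_def)
next
  case False
  have "Kdist n1 n2 n3 x y = enat 2"
  proof (rule Kdist_eq)
    show "Kwalk n1 n2 n3 2 x y" using walk2 assms by blast
    fix k' :: nat assume "k' < 2"
    then have "k' = 0 \<or> k' = Suc 0" by auto
    moreover have "\<not> Kwalk n1 n2 n3 0 x y" using assms(6) by (simp only: Kwalk.simps) blast
    moreover have "\<not> Kwalk n1 n2 n3 (Suc 0) x y" using False by (simp only: Kwalk.simps) blast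
    ultimately show "\<not> Kwalk n1 n2 n3 k' x y" by blast
  qed
  then show ?thesis using False by (simp add: numeral_eq_enat)
qed


lemma Kadj_iff:
  assumes "x \<in> Kverts n1 n2 n3" "w \<in> Kverts n1 n2 n3" "{i,j,k} = {1,2,3::nat}"
  shows "Kadj n1 n2 n3 x w \<longleftrightarrow>
    \<not> (coord w i = coord x i \<or> coord w j = coord x j \<or> coord w k = coord x k)"
  using assms(1,2) unfolding Kadj_def assms(3)[symmetric] by auto

theorem mainTheorem3:
  fixes n1 n2 n3 :: nat and W :: "vtx set"
  assumes "3 \<le> n1" and "3 \<le> n2" and "n1 \<le> n3" and "n2 \<le> n3"
    and "W \<subseteq> Kverts n1 n2 n3"
    and "\<exists>u. triple_loop W u"
    and "rainbow_22_triangle W"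
  shows "\<not> resolving n1 n2 n3 W"
proof
  assume res: "resolving n1 n2 n3 W"
  have n3: "3 \<le> n3" using assms by linarith
  obtain u where tl: "triple_loop W u" using assms(6) by blast
  obtain w1 w2 w3 i j k E where
    W: "w1 \<in> W" "w2 \<in> W" "w3 \<in> W" and d: "w1 \<noteq> w2" "w2 \<noteq> w3" "w1 \<noteq> w3"
    and ijk: "{i, j, k} = {1, 2, 3::nat}"
    and h1: "hyperedge W i {w1, w2}" and h2: "hyperedge W j {w2, w3}"
    and h3: "hyperedge W k E" "w1 \<in> E" "w3 \<in> E"
    using assms(7) unfolding rainbow_22_triangle_def by (elim exE conjE) (rule that; assumption)
  have mem: "i \<in> {1,2,3}" "j \<in> {1,2,3}" "k \<in> {1,2,3}" using ijk by auto
  have m123: "1 \<in> {i,j,k}" "2 \<in> {i,j,k}" "3 \<in> {i,j,k}" using ijk by auto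
  have dij: "i \<noteq> j" "j \<noteq> k" "i \<noteq> k" using m123 by auto
  obtain a where a: "{w1, w2} = Wcls W i a" using h1 unfolding hyperedge_def by blast
  obtain b where b: "{w2, w3} = Wcls W j b" using h2 unfolding hyperedge_def by blast
  obtain c where c: "w1 \<in> Wcls W k c" "w3 \<in> Wcls W k c" using h3 unfolding hyperedge_def by auto
  have Fa: "\<And>w. w \<in> W \<Longrightarrow> coord w i = a \<longleftrightarrow> w = w1 \<or> w = w2"
    using a unfolding Wcls_def by blast
  have Fb: "\<And>w. w \<in> W \<Longrightarrow> coord w j = b \<longleftrightarrow> w = w2 \<or> w = w3"
    using b unfolding Wcls_def by blast
  have Fc: "coord w1 k = c" "coord w3 k = c" using c unfolding Wcls_def by auto
  have uW: "u \<in> W" using tl unfolding triple_loop_def by blast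
  have Fu: "\<And>w l. w \<in> W \<Longrightarrow> l \<in> {1,2,3} \<Longrightarrow> coord w l = coord u l \<longleftrightarrow> w = u"
  proof -
    fix w l assume "w \<in> W" "l \<in> {1,2,3::nat}"
    then show "coord w l = coord u l \<longleftrightarrow> w = u"
    proof -
      have "Wcls W l (coord u l) = {u}" using tl \<open>l \<in> {1,2,3}\<close> unfolding triple_loop_def by auto
      then show ?thesis using \<open>w \<in> W\<close> unfolding Wcls_def by blast
    qed
  qed
  have ua: "coord u i \<noteq> a"
  proof
    assume "coord u i = a"
    then have "u = w1 \<or> u = w2" using Fa uW by blast
    then have "coord w1 i = coord u i" "coord w2 i = coord u i" using Fa W \<open>coord u i = a\<close> by auto
    then have "w1 = u" "w2 = u" using Fu W mem by auto
    then show False using d by simp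
  qed
  have ub: "coord u j \<noteq> b"
  proof
    assume "coord u j = b"
    then have "coord w2 j = coord u j" "coord w3 j = coord u j" using Fb W by auto
    then have "w2 = u" "w3 = u" using Fu W mem by auto
    then show False using d by simp
  qed
  define sx where "sx = (\<lambda>l::nat. if l = i then w1 else if l = j then u else w1)"
  define sy where "sy = (\<lambda>l::nat. if l = i then u else if l = j then w2 else w1)"
  define x where "x = mkv (\<lambda>l. coord (sx l) l)"
  define y where "y = mkv (\<lambda>l. coord (sy l) l)"
  have WK: "\<And>w. w \<in> W \<Longrightarrow> w \<in> Kverts n1 n2 n3" using assms(5) by blast
  have xK: "x \<in> Kverts n1 n2 n3" unfolding x_def
    by (rule mkv_Kverts) (auto simp: sx_def intro: WK W uW)
  have yK: "y \<in> Kverts n1 n2 n3" unfolding y_def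
    by (rule mkv_Kverts) (auto simp: sy_def intro: WK W uW)
  have cx: "coord x i = a" "coord x j = coord u j" "coord x k = c"
    unfolding x_def using mem dij Fa W Fc by (auto simp: coord_mkv sx_def)
  have cy: "coord y i = coord u i" "coord y j = b" "coord y k = c"
    unfolding y_def using mem dij Fb W Fc by (auto simp: coord_mkv sy_def)
  have xy: "x \<noteq> y" using cx cy ua by metis
  have xW: "x \<notin> W"
  proof
    assume "x \<in> W"
    then have "x = u" using Fu cx mem by blast
    then show False using cx ua by simp
  qed
  have yW: "y \<notin> W"
  proof
    assume "y \<in> W"
    then have "y = u" using Fu cy mem by blast
    then show False using cy ub by simp
  qed
  have same: "\<And>w. w \<in> W \<Longrightarrow> Kadj n1 n2 n3 x w \<longleftrightarrow> Kadj n1 n2 n3 y w"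
  proof -
    fix w assume wW: "w \<in> W"
    have "(coord w i = coord x i \<or> coord w j = coord x j \<or> coord w k = coord x k) \<longleftrightarrow>
          (coord w i = coord y i \<or> coord w j = coord y j \<or> coord w k = coord y k)"
      unfolding cx cy
    proof
      assume "coord w i = a \<or> coord w j = coord u j \<or> coord w k = c"
      then show "coord w i = coord u i \<or> coord w j = b \<or> coord w k = c"
      proof (elim disjE)
        assume "coord w i = a"
        then have "w = w1 \<or> w = w2" using Fa wW by blast
        moreover have "coord w2 j = b" using Fb W(2) by blast
        ultimately show ?thesis using Fc by auto
      next
        assume "coord w j = coord u j"
        then have "w = u" using Fu wW mem by blast
        then show ?thesis by simp
      qed simp
    next
      assume "coord w i = coord u i \<or> coord w j = b \<or> coord w k = c"
      then show "coord w i = a \<or> coord w j = coord u j \<or> coord w k = c"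
      proof (elim disjE)
        assume "coord w j = b"
        then have "w = w2 \<or> w = w3" using Fb wW by blast
        moreover have "coord w2 i = a" using Fa W(2) by blast
        ultimately show ?thesis using Fc by auto
      next
        assume "coord w i = coord u i"
        then have "w = u" using Fu wW mem by blast
        then show ?thesis by simp
      qed simp
    qed
    then show "Kadj n1 n2 n3 x w \<longleftrightarrow> Kadj n1 n2 n3 y w"
      using Kadj_iff[OF xK WK[OF wW] ijk] Kadj_iff[OF yK WK[OF wW] ijk] by simp
  qed
  have "\<forall>w\<in>W. Kdist n1 n2 n3 x w = Kdist n1 n2 n3 y w"
  proof
    fix w assume wW: "w \<in> W"
    have "x \<noteq> w" "y \<noteq> w" using xW yW wW by auto
    then show "Kdist n1 n2 n3 x w = Kdist n1 n2 n3 y w"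
      using Kdist_val[OF xK WK[OF wW] assms(1,2) n3] Kdist_val[OF yK WK[OF wW] assms(1,2) n3]
        same[OF wW] by simp
  qed
  moreover have "\<exists>w\<in>W. Kdist n1 n2 n3 x w \<noteq> Kdist n1 n2 n3 y w"
    using res xK yK xW yW xy unfolding resolving_def by blast
  ultimately show False by blast
qed

end
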